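(* Let $(X,d)$ be a metric space and let $F$ be a semiflow on $X$ with strong compact dynamics, with strong global attractor $\mathcal G$. If $x\in\mathcal G$, $y\in X$ and $x\succcurlyeq_{\mathcal S} y$, then $y\in\mathcal G$.
   Context: A semiflow on a metric space $(X,d)$ is a continuous map $F:[0,\infty)\times X\to X$, $(t,x)\mapsto F^t(x)$, with $F^0=\mathrm{id}$ and $F^{t+s}=F^t\circ F^s$. A curve is piecewise continuous if it is continuous except at finitely many points, at which one-sided limits exist. For $T\ge1$, a piecewise continuous curve $\gamma:[0,T]\to X$ is $\varepsilon$-close to $F$ if $d(\gamma(t+\tau),F^\tau(\gamma(t)))<\varepsilon$ for every $\tau\in[0,1]$ and $t\in[0,T-\tau]$. An $\varepsilon$-chain from $x$ to $y$ is a piecewise continuous $\gamma:[0,T]\to X$, $T\ge 1$, with $\gamma(0)=x$, $\gamma(T)=y$, $\gamma$ $\varepsilon$-close to $F$. Write $x\succcurlyeq_{\mathcal S} y$ if for every $\varepsilon>0$ there is an $\varepsilon$-chain from $x$ to $y$. For $G\subset X$, $N_\varepsilon(G)=\{y: d(y,G)<\varepsilon\}$ and $W_\varepsilon(G)=\bigcup_{t\ge0}F^t(N_\varepsilon(G))$. A set $G$ attracts $K$ if for every $\varepsilon>0$ there is $T>0$ with $F^t(K)\subset N_\varepsilon(G)$ for all $t\ge T$. The global attractor $\mathcal G$ of $F$, if it exists, is a maximal invariant compact subset of $X$ attracting every compact $K\subset X$. It is strong if there is $\varepsilon>0$ such that $\mathcal G$ attracts $N_\varepsilon(\mathcal G)$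 and the map $(t,z)\mapsto F^t(z)$ is uniformly continuous on $[0,1]\times W_\varepsilon(\mathcal G)$. $F$ has strong compact dynamics if it has a strong global attractor. *)

theory Defs
  imports "HOL-Analysis.Analysis"
begin

text \<open>The metric space X is the whole carrier of a type of class metric_space;
  a semiflow is F :: real => 'a => 'a, where only times t >= 0 matter.\<close>

definition semiflow :: "(real \<Rightarrow> 'a::metric_space \<Rightarrow> 'a) \<Rightarrow> bool" where
  "semiflow F \<longleftrightarrow>
     continuous_on ({0..} \<times> UNIV) (\<lambda>(t, x). F t x) \<and>
     F 0 = id \<and>
     (\<forall>t s. t \<ge> 0 \<longrightarrow> s \<ge> 0 \<longrightarrow> F (t + s) = F t \<circ> F s)"

definition piecewise_cont :: "real \<Rightarrow> (real \<Rightarrow> 'a::metric_space) \<Rightarrow> bool" where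
  "piecewise_cont T \<gamma> \<longleftrightarrow>
     (\<exists>S. finite S \<and>
        (\<forall>t\<in>{0..T} - S. continuous (at t within {0..T}) \<gamma>) \<and>
        (\<forall>t\<in>S \<inter> {0..T}. (0 < t \<longrightarrow> (\<exists>l. (\<gamma> \<longlongrightarrow> l) (at_left t))) \<and>
                       (t < T \<longrightarrow> (\<exists>l. (\<gamma> \<longlongrightarrow> l) (at_right t)))))"

definition eps_close :: "(real \<Rightarrow> 'a::metric_space \<Rightarrow> 'a) \<Rightarrow> real \<Rightarrow> real \<Rightarrow> (real \<Rightarrow> 'a) \<Rightarrow> bool" where
  "eps_close F \<epsilon> T \<gamma> \<longleftrightarrow>
     (\<forall>\<tau>\<in>{0..1}. \<forall>t\<in>{0..T - \<tau>}. dist (\<gamma> (t + \<tau>)) (F \<tau> (\<gamma> t)) < \<epsilon>)"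

definition eps_chain :: "(real \<Rightarrow> 'a::metric_space \<Rightarrow> 'a) \<Rightarrow> real \<Rightarrow> real \<Rightarrow> (real \<Rightarrow> 'a) \<Rightarrow> 'a \<Rightarrow> 'a \<Rightarrow> bool" where
  "eps_chain F \<epsilon> T \<gamma> x y \<longleftrightarrow>
     T \<ge> 1 \<and> piecewise_cont T \<gamma> \<and> \<gamma> 0 = x \<and> \<gamma> T = y \<and> eps_close F \<epsilon> T \<gamma>"

definition chain_succ :: "(real \<Rightarrow> 'a::metric_space \<Rightarrow> 'a) \<Rightarrow> 'a \<Rightarrow> 'a \<Rightarrow> bool" where
  "chain_succ F x y \<longleftrightarrow> (\<forall>\<epsilon>>0. \<exists>T \<gamma>. eps_chain F \<epsilon> T \<gamma> x y)"

definition nbhd :: "real \<Rightarrow> 'a::metric_space set \<Rightarrow> 'a set" where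
  "nbhd \<epsilon> G = {y. \<exists>g\<in>G. dist y g < \<epsilon>}"

definition W_set :: "(real \<Rightarrow> 'a::metric_space \<Rightarrow> 'a) \<Rightarrow> real \<Rightarrow> 'a set \<Rightarrow> 'a set" where
  "W_set F \<epsilon> G = (\<Union>t\<in>{0..}. F t ` nbhd \<epsilon> G)"

definition attracts :: "(real \<Rightarrow> 'a::metric_space \<Rightarrow> 'a) \<Rightarrow> 'a set \<Rightarrow> 'a set \<Rightarrow> bool" where
  "attracts F G K \<longleftrightarrow> (\<forall>\<epsilon>>0. \<exists>T>0. \<forall>t\<ge>T. F t ` K \<subseteq> nbhd \<epsilon> G)"

definition invariant :: "(real \<Rightarrow> 'a \<Rightarrow> 'a) \<Rightarrow> 'a set \<Rightarrow> bool" where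
  "invariant F A \<longleftrightarrow> (\<forall>t\<ge>0. F t ` A = A)"

definition global_attractor :: "(real \<Rightarrow> 'a::metric_space \<Rightarrow> 'a) \<Rightarrow> 'a set \<Rightarrow> bool" where
  "global_attractor F G \<longleftrightarrow>
     compact G \<and> invariant F G \<and>
     (\<forall>A. compact A \<and> invariant F A \<longrightarrow> A \<subseteq> G) \<and>
     (\<forall>K. compact K \<longrightarrow> attracts F G K)"

definition strong_global_attractor :: "(real \<Rightarrow> 'a::metric_space \<Rightarrow> 'a) \<Rightarrow> 'a set \<Rightarrow> bool" where
  "strong_global_attractor F G \<longleftrightarrow>
     global_attractor F G \<and>
     (\<exists>\<epsilon>>0. attracts F G (nbhd \<epsilon> G) \<and>
        uniformly_continuous_on ({0..1} \<times> W_set F \<epsilon> G) (\<lambda>(t, z). F t z))"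

end

theory Submission
  imports Defs
begin

lemma nbhd_tri:
  assumes "z \<in> nbhd a G" "dist w z < b"
  shows "w \<in> nbhd (a + b) G"
proof -
  obtain g where g: "g \<in> G" "dist z g < a" using assms(1) unfolding nbhd_def by blast
  have "dist w g \<le> dist w z + dist z g" by (rule dist_triangle)
  then have "dist w g < a + b" using g assms(2) by linarith
  then show ?thesis using g unfolding nbhd_def by blast
qed

lemma nbhd_mono: "a \<le> b \<Longrightarrow> nbhd a G \<subseteq> nbhd b G"
  unfolding nbhd_def by force

lemma eps_close_mono: "eps_close F e T \<gamma> \<Longrightarrow> e \<le> e' \<Longrightarrow> eps_close F e' T \<gamma>"
  unfolding eps_close_def by force

lemma uc_base:
  fixes F :: "real \<Rightarrow> 'a::metric_space \<Rightarrow> 'b::metric_space"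
  assumes "uniformly_continuous_on ({0..1} \<times> W) (\<lambda>(t, z). F t z)" "\<eta> > 0"
  shows "\<exists>\<delta>>0. \<forall>\<tau>\<in>{0..1}. \<forall>z\<in>W. \<forall>z'\<in>W. dist z z' < \<delta> \<longrightarrow> dist (F \<tau> z) (F \<tau> z') < \<eta>"
proof -
  obtain d where d: "d > 0" "\<forall>p\<in>{0..1} \<times> W. \<forall>p'\<in>{0..1} \<times> W. dist p' p < d \<longrightarrow>
      dist ((\<lambda>(t, z). F t z) p') ((\<lambda>(t, z). F t z) p) < \<eta>"
    using assms unfolding uniformly_continuous_on_def by metis
  show ?thesis
  proof (intro exI[of _ d] conjI ballI impI)
    fix \<tau> z z' assume h: "\<tau> \<in> {0..1::real}" "z \<in> W" "z' \<in> W" "dist z z' < d"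
    have "dist (\<tau>, z) (\<tau>, z') = dist z z'" by (simp add: dist_Pair_Pair)
    then have "dist (F \<tau> z) (F \<tau> z') < \<eta>"
      using d(2)[rule_format, of "(\<tau>, z')" "(\<tau>, z)"] h by simp
    then show "dist (F \<tau> z) (F \<tau> z') < \<eta>" .
  qed (use d in auto)
qed

lemma uc_n:
  assumes sf: "semiflow F"
    and base: "\<forall>\<eta>>0. \<exists>\<delta>>0. \<forall>\<tau>\<in>{0..1}. \<forall>z\<in>W. \<forall>z'\<in>W. dist z z' < \<delta> \<longrightarrow> dist (F \<tau> z) (F \<tau> z') < \<eta>"
    and fw: "\<forall>z\<in>W. F 1 z \<in> W"
  shows "\<forall>\<eta>>0. \<exists>\<delta>>0. \<forall>u\<in>{0..real k}. \<forall>z\<in>W. \<forall>z'\<in>W. dist z z' < \<delta> \<longrightarrow> dist (F u z) (F u z') < \<eta>"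
proof (induction k)
  case 0
  have F0: "F 0 = id" using sf unfolding semiflow_def by blast
  show ?case
  proof (intro allI impI)
    fix \<eta> :: real assume "\<eta> > 0"
    then show "\<exists>\<delta>>0. \<forall>u\<in>{0..real 0}. \<forall>z\<in>W. \<forall>z'\<in>W. dist z z' < \<delta> \<longrightarrow> dist (F u z) (F u z') < \<eta>"
      using F0 by (intro exI[of _ \<eta>]) auto
  qed
next
  case (Suc k)
  show ?case
  proof (intro allI impI)
    fix \<eta> :: real assume e: "\<eta> > 0"
    obtain d1 where d1: "d1 > 0" "\<forall>u\<in>{0..real k}. \<forall>z\<in>W. \<forall>z'\<in>W. dist z z' < d1 \<longrightarrow> dist (F u z) (F u z') < \<eta>"
      using Suc.IH e by blast
    obtain d2 where d2: "d2 > 0" "\<forall>\<tau>\<in>{0..1}. \<forall>z\<in>W. \<forall>z'\<in>W. dist z z' < d2 \<longrightarrow> dist (F \<tau> z) (F \<tau> z') < d1"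
      using base d1(1) by blast
    obtain d3 where d3: "d3 > 0" "\<forall>\<tau>\<in>{0..1}. \<forall>z\<in>W. \<forall>z'\<in>W. dist z z' < d3 \<longrightarrow> dist (F \<tau> z) (F \<tau> z') < \<eta>"
      using base e by blast
    show "\<exists>\<delta>>0. \<forall>u\<in>{0..real (Suc k)}. \<forall>z\<in>W. \<forall>z'\<in>W. dist z z' < \<delta> \<longrightarrow> dist (F u z) (F u z') < \<eta>"
    proof (intro exI[of _ "min d2 d3"] conjI ballI impI)
      show "min d2 d3 > 0" using d2 d3 by simp
      fix u z z' assume h: "u \<in> {0..real (Suc k)}" "z \<in> W" "z' \<in> W" "dist z z' < min d2 d3"
      show "dist (F u z) (F u z') < \<eta>"
      proof (cases "u \<le> 1")
        case True
        then show ?thesis using d3(2) h by auto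
      next
        case False
        have cr: "\<forall>t s. t \<ge> 0 \<longrightarrow> s \<ge> 0 \<longrightarrow> F (t + s) = F t \<circ> F s"
          using sf unfolding semiflow_def by blast
        have comp: "F u = F (u - 1) \<circ> F 1"
          using cr[rule_format, of "u - 1" 1] False by simp
        have "dist (F 1 z) (F 1 z') < d1" using d2(2) h by auto
        moreover have "u - 1 \<in> {0..real k}" using h False by auto
        ultimately have "dist (F (u - 1) (F 1 z)) (F (u - 1) (F 1 z')) < \<eta>"
          using d1(2) fw h by blast
        then show ?thesis using comp by simp
      qed
    qed
  qed
qed

lemma shadow:
  assumes sf: "semiflow F"
    and base: "\<forall>\<eta>>0. \<exists>\<delta>>0. \<forall>\<tau>\<in>{0..1}. \<forall>z\<in>W. \<forall>z'\<in>W. dist z z' < \<delta> \<longrightarrow> dist (F \<tau> z) (F \<tau> z') < \<eta>"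
    and sub: "nbhd r G \<subseteq> W"
    and stab: "\<forall>z\<in>nbhd \<rho> G. \<forall>t\<ge>0. F t z \<in> nbhd (r/2) G"
  shows "\<forall>\<eta>. 0 < \<eta> \<longrightarrow> \<eta> \<le> r/2 \<longrightarrow> (\<exists>\<epsilon>>0. \<forall>\<gamma> T s u. eps_close F \<epsilon> T \<gamma> \<longrightarrow> 0 \<le> s \<longrightarrow>
     \<gamma> s \<in> nbhd \<rho> G \<longrightarrow> 0 \<le> u \<longrightarrow> u \<le> real k \<longrightarrow> s + u \<le> T \<longrightarrow> dist (\<gamma> (s + u)) (F u (\<gamma> s)) < \<eta>)"
proof (induction k)
  case 0
  have F0: "F 0 = id" using sf unfolding semiflow_def by blast
  show ?case
    by (intro allI impI exI[of _ 1]) (auto simp: F0)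
next
  case (Suc k)
  show ?case
  proof (intro allI impI)
    fix \<eta> :: real assume e: "0 < \<eta>" "\<eta> \<le> r/2"
    obtain d where d: "d > 0" "\<forall>\<tau>\<in>{0..1}. \<forall>z\<in>W. \<forall>z'\<in>W. dist z z' < d \<longrightarrow> dist (F \<tau> z) (F \<tau> z') < \<eta>/2"
      using base e by (metis half_gt_zero)
    have "0 < min d \<eta>" "min d \<eta> \<le> r/2" using d e by auto
    then obtain e1 where e1: "e1 > 0" "\<forall>\<gamma> T s u. eps_close F e1 T \<gamma> \<longrightarrow> 0 \<le> s \<longrightarrow>
     \<gamma> s \<in> nbhd \<rho> G \<longrightarrow> 0 \<le> u \<longrightarrow> u \<le> real k \<longrightarrow> s + u \<le> T \<longrightarrow> dist (\<gamma> (s + u)) (F u (\<gamma> s)) < min d \<eta>"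
      using Suc.IH by blast
    show "\<exists>\<epsilon>>0. \<forall>\<gamma> T s u. eps_close F \<epsilon> T \<gamma> \<longrightarrow> 0 \<le> s \<longrightarrow>
     \<gamma> s \<in> nbhd \<rho> G \<longrightarrow> 0 \<le> u \<longrightarrow> u \<le> real (Suc k) \<longrightarrow> s + u \<le> T \<longrightarrow> dist (\<gamma> (s + u)) (F u (\<gamma> s)) < \<eta>"
    proof (intro exI[of _ "min e1 (\<eta>/2)"] conjI allI impI)
      show "0 < min e1 (\<eta>/2)" using e1 e by simp
      fix \<gamma> T s u
      assume h: "eps_close F (min e1 (\<eta> / 2)) T \<gamma>" "0 \<le> s" "\<gamma> s \<in> nbhd \<rho> G" "0 \<le> u"
        "u \<le> real (Suc k)" "s + u \<le> T"
      have c1: "eps_close F e1 T \<gamma>" using h(1) eps_close_mono by (metis min.cobounded1)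
      show "dist (\<gamma> (s + u)) (F u (\<gamma> s)) < \<eta>"
      proof (cases "u \<le> real k")
        case True
        then show ?thesis using e1(2) c1 h by fastforce
      next
        case False
        define \<tau> where "\<tau> = u - real k"
        have tau: "\<tau> \<in> {0..1}" using False h(5) unfolding \<tau>_def by auto
        have A: "dist (\<gamma> (s + real k)) (F (real k) (\<gamma> s)) < min d \<eta>"
          using e1(2) c1 h False by fastforce
        have B: "F (real k) (\<gamma> s) \<in> nbhd (r/2) G" using stab h by auto
        have "\<gamma> (s + real k) \<in> nbhd (r/2 + \<eta>) G" using nbhd_tri[OF B] A by auto
        then have "\<gamma> (s + real k) \<in> nbhd r G" using nbhd_mono[of "r/2 + \<eta>" r G] e by auto
        then have W1: "\<gamma> (s + real k) \<in> W" using sub by auto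
        have W2: "F (real k) (\<gamma> s) \<in> W" using B sub nbhd_mono[of "r/2" r G] e by auto
        have C: "dist (F \<tau> (\<gamma> (s + real k))) (F \<tau> (F (real k) (\<gamma> s))) < \<eta>/2"
          using d(2) tau W1 W2 A by auto
        have comp: "F (\<tau> + real k) = F \<tau> \<circ> F (real k)"
          using sf tau unfolding semiflow_def by auto
        have D: "F \<tau> (F (real k) (\<gamma> s)) = F u (\<gamma> s)"
          using comp unfolding \<tau>_def by (metis comp_apply diff_add_cancel)
        have E: "dist (\<gamma> ((s + real k) + \<tau>)) (F \<tau> (\<gamma> (s + real k))) < min e1 (\<eta>/2)"
        proof -
          have "s + real k \<in> {0..T - \<tau>}" using h(2) h(6) unfolding \<tau>_def by auto
          then show ?thesis using h(1) tau unfolding eps_close_def by blast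
        qed
        have su: "(s + real k) + \<tau> = s + u" unfolding \<tau>_def by simp
        have "dist (\<gamma> (s + u)) (F u (\<gamma> s)) \<le> dist (\<gamma> (s + u)) (F \<tau> (\<gamma> (s + real k)))
            + dist (F \<tau> (\<gamma> (s + real k))) (F u (\<gamma> s))" by (rule dist_triangle)
        then show ?thesis using C D E su by simp
      qed
    qed
  qed
qed

theorem proposition3p1:
  fixes F :: "real \<Rightarrow> 'a::metric_space \<Rightarrow> 'a" and G :: "'a set" and x y :: 'a
  assumes "semiflow F"
    and "strong_global_attractor F G"
    and "x \<in> G"
    and "chain_succ F x y"
  shows "y \<in> G"
proof (rule ccontr)
  assume ny: "y \<notin> G"
  note sf = assms(1)
  have cG: "compact G" and inv: "invariant F G"
    using assms(2) unfolding strong_global_attractor_def global_attractor_def by auto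
  obtain e0 where e0: "e0 > 0" "attracts F G (nbhd e0 G)"
    "uniformly_continuous_on ({0..1} \<times> W_set F e0 G) (\<lambda>(t, z). F t z)"
    using assms(2) unfolding strong_global_attractor_def by blast
  define W where "W = W_set F e0 G"
  have F0: "F 0 = id" using sf unfolding semiflow_def by blast
  have Finv: "\<And>t g. t \<ge> 0 \<Longrightarrow> g \<in> G \<Longrightarrow> F t g \<in> G" using inv unfolding invariant_def by blast
  have "open (- G)" using compact_imp_closed[OF cG] by (simp add: open_Compl)
  then obtain \<delta> where dl: "\<delta> > 0" "ball y \<delta> \<subseteq> - G" using ny open_contains_ball by blast
  have far: "\<And>g. g \<in> G \<Longrightarrow> \<delta> \<le> dist y g" using dl(2) by (force simp: ball_def dist_commute)
  define r where "r = min e0 \<delta>"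
  have r: "r > 0" "r \<le> e0" "r \<le> \<delta>" using e0 dl unfolding r_def by auto
  have base: "\<forall>\<eta>>0. \<exists>\<delta>>0. \<forall>\<tau>\<in>{0..1}. \<forall>z\<in>W. \<forall>z'\<in>W. dist z z' < \<delta> \<longrightarrow> dist (F \<tau> z) (F \<tau> z') < \<eta>"
    using uc_base[OF e0(3)] unfolding W_def by blast
  have NW: "nbhd e0 G \<subseteq> W" unfolding W_def W_set_def using F0 by force
  have fw: "\<forall>z\<in>W. F 1 z \<in> W"
  proof
    fix z assume "z \<in> W"
    then obtain t w where tw: "t \<ge> 0" "w \<in> nbhd e0 G" "z = F t w" unfolding W_def W_set_def by auto
    have "F (1 + t) = F 1 \<circ> F t" using sf tw unfolding semiflow_def by auto
    then have "F 1 z = F (1 + t) w" using tw by simp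
    then show "F 1 z \<in> W" using tw unfolding W_def W_set_def by (auto intro!: bexI[of _ "1 + t"])
  qed
  have subr: "nbhd r G \<subseteq> W" using NW nbhd_mono[OF r(2)] by blast
  obtain T1 where T1: "T1 > 0" "\<forall>t\<ge>T1. F t ` nbhd e0 G \<subseteq> nbhd (r/2) G"
    using e0(2) r unfolding attracts_def by (metis half_gt_zero)
  define n1 where "n1 = nat \<lceil>T1\<rceil>"
  have n1: "real n1 \<ge> T1" unfolding n1_def by linarith
  obtain d1 where d1: "d1 > 0" "\<forall>u\<in>{0..real n1}. \<forall>z\<in>W. \<forall>z'\<in>W. dist z z' < d1 \<longrightarrow> dist (F u z) (F u z') < r/2"
    using uc_n[OF sf base fw, of n1] r by (metis half_gt_zero)
  define \<rho> where "\<rho> = min d1 e0"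
  have rho: "\<rho> > 0" "\<rho> \<le> d1" "\<rho> \<le> e0" using d1 e0 unfolding \<rho>_def by auto
  have stab: "\<forall>z\<in>nbhd \<rho> G. \<forall>t\<ge>0. F t z \<in> nbhd (r/2) G"
  proof (intro ballI allI impI)
    fix z t assume z: "z \<in> nbhd \<rho> G" and t: "(t::real) \<ge> 0"
    have zE: "z \<in> nbhd e0 G" using z nbhd_mono[OF rho(3)] by blast
    show "F t z \<in> nbhd (r/2) G"
    proof (cases "t \<le> real n1")
      case True
      obtain g where g: "g \<in> G" "dist z g < \<rho>" using z unfolding nbhd_def by blast
      have gW: "g \<in> W" using g NW e0(1) unfolding nbhd_def by force
      have "dist (F t z) (F t g) < r/2" using d1(2) True t zE NW gW g rho by fastforce
      then show ?thesis using Finv[OF t g(1)] unfolding nbhd_def by blast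
    next
      case False
      then have "t \<ge> T1" using n1 by linarith
      then have "F t ` nbhd e0 G \<subseteq> nbhd (r/2) G" using T1(2) by blast
      then show ?thesis using zE by blast
    qed
  qed
  obtain T2 where T2: "T2 > 0" "\<forall>t\<ge>T2. F t ` nbhd e0 G \<subseteq> nbhd (\<rho>/2) G"
    using e0(2) rho unfolding attracts_def by (metis half_gt_zero)
  define n where "n = nat \<lceil>T2\<rceil>"
  have n: "real n \<ge> T2" "real n > 0" using T2 unfolding n_def by linarith+
  define \<eta> where "\<eta> = min (r/2) (\<rho>/2)"
  have eta: "\<eta> > 0" "\<eta> \<le> r/2" "\<eta> \<le> \<rho>/2" using r rho unfolding \<eta>_def by auto
  obtain \<epsilon> where ep: "\<epsilon> > 0" "\<forall>\<gamma> T s u. eps_close F \<epsilon> T \<gamma> \<longrightarrow> 0 \<le> s \<longrightarrow>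
     \<gamma> s \<in> nbhd \<rho> G \<longrightarrow> 0 \<le> u \<longrightarrow> u \<le> real n \<longrightarrow> s + u \<le> T \<longrightarrow> dist (\<gamma> (s + u)) (F u (\<gamma> s)) < \<eta>"
    using shadow[OF sf base subr stab, of n] eta by blast
  obtain T \<gamma> where ch: "eps_chain F \<epsilon> T \<gamma> x y" using assms(4) ep(1) unfolding chain_succ_def by blast
  have cl: "eps_close F \<epsilon> T \<gamma>" and g0: "\<gamma> 0 = x" and gT: "\<gamma> T = y" and T1': "T \<ge> 1"
    using ch unfolding eps_chain_def by auto
  have step: "\<forall>m::nat. real m * real n \<le> T \<longrightarrow> \<gamma> (real m * real n) \<in> nbhd \<rho> G"
  proof
    fix m :: nat
    show "real m * real n \<le> T \<longrightarrow> \<gamma> (real m * real n) \<in> nbhd \<rho> G"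
    proof (induction m)
      case 0
      show ?case using g0 assms(3) rho unfolding nbhd_def by force
    next
      case (Suc m)
      show ?case
      proof
        assume le: "real (Suc m) * real n \<le> T"
        have eq: "real (Suc m) * real n = real m * real n + real n" by (simp add: algebra_simps)
        have le2: "real m * real n \<le> T" using le eq n by linarith
        have gs: "\<gamma> (real m * real n) \<in> nbhd \<rho> G" using Suc le2 by blast
        have nn: "0 \<le> real m * real n" by simp
        have A: "dist (\<gamma> (real m * real n + real n)) (F (real n) (\<gamma> (real m * real n))) < \<eta>"
          using ep(2) cl nn gs le eq by fastforce
        have "\<gamma> (real m * real n) \<in> nbhd e0 G" using gs nbhd_mono[OF rho(3)] by blast
        then have B: "F (real n) (\<gamma> (real m * real n)) \<in> nbhd (\<rho>/2) G" using T2(2) n by blast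
        have "\<gamma> (real m * real n + real n) \<in> nbhd (\<rho>/2 + \<eta>) G" using nbhd_tri[OF B A] .
        then show "\<gamma> (real (Suc m) * real n) \<in> nbhd \<rho> G"
          using nbhd_mono[of "\<rho>/2 + \<eta>" \<rho> G] eta eq by auto
      qed
    qed
  qed
  have T0: "T \<ge> 0" using T1' by simp
  define m where "m = nat \<lfloor>T / real n\<rfloor>"
  have fl0: "\<lfloor>T / real n\<rfloor> \<ge> 0" using T0 n by simp
  have mfl: "real m = of_int \<lfloor>T / real n\<rfloor>" unfolding m_def using fl0 by simp
  have "real m \<le> T / real n" using mfl by linarith
  then have ms: "real m * real n \<le> T" using n by (simp add: pos_le_divide_eq)
  have "T / real n < real m + 1" using mfl by linarith
  then have ms2: "T < (real m + 1) * real n" using n by (simp add: pos_divide_less_eq)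
  define s where "s = real m * real n"
  define u where "u = T - s"
  have gs: "\<gamma> s \<in> nbhd \<rho> G" using step ms unfolding s_def by blast
  have u: "0 \<le> u" "u \<le> real n" "s + u \<le> T" using ms ms2 unfolding u_def s_def by (auto simp: algebra_simps)
  have A: "dist (\<gamma> (s + u)) (F u (\<gamma> s)) < \<eta>"
    using ep(2) cl gs u unfolding s_def by (meson mult_nonneg_nonneg of_nat_0_le_iff)
  have B: "F u (\<gamma> s) \<in> nbhd (r/2) G" using stab gs u by blast
  have "y \<in> nbhd (r/2 + \<eta>) G" using nbhd_tri[OF B A] gT unfolding u_def by simp
  then have "y \<in> nbhd r G" using nbhd_mono[of "r/2 + \<eta>" r G] eta by auto
  then obtain g where "g \<in> G" "dist y g < r" unfolding nbhd_def by blast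
  then show False using far r by fastforce
qed

end
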